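(* Let $M$ be the spacetime with metric $$ds^2=-b^2(r)\,dt^2+f_1^2(r)\,dr^2+f_2^2(r)\,(d\theta^2+\sin^2\theta\,d\phi^2),$$ where $b,f_1,f_2$ are smooth positive functions of $r$ on an open interval. Let $u_k$ be the unit timelike covector with components $u_0=-b$, $u_r=u_\theta=u_\phi=0$, and let $\chi_k$ be the unit spacelike radial covector with components $\chi_r=f_1$, $\chi_0=\chi_\theta=\chi_\phi=0$. For smooth functions $\mathsf A(r),\mathsf B(r),\mathsf C(r)$ consider the symmetric tensor $$K_{kl}=\mathsf A(r)\,u_ku_l+\mathsf B(r)\,g_{kl}+\mathsf C(r)\,\chi_k\chi_l .$$ Then $K_{kl}$ is a divergence-free conformal Killing tensor if and only if there exist constants $\kappa_1,\kappa_2,\kappa_3$ such that $$\mathsf A=\kappa_2 f_2^2-2\kappa_3 b^2,\qquad \mathsf B=\kappa_1+2\kappa_2 f_2^2+\kappa_3 b^2,\qquad \mathsf C=-\kappa_2 f_2^2 .$$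
   Context: $\nabla$ is the Levi-Civita connection of $g$. A symmetric tensor $K_{kl}$ with trace $K=K^k{}_k$ is called a conformal Killing tensor (in the convention used here) if $\nabla_jK_{kl}+\nabla_kK_{jl}+\nabla_lK_{jk}=\tfrac16\left(g_{kl}\nabla_jK+g_{jl}\nabla_kK+g_{jk}\nabla_lK\right)$, and divergence-free if $\nabla^kK_{kl}=0$. *)

theory Defs
  imports "HOL-Analysis.Analysis"
begin

text \<open>Coordinates: a point is x :: nat => real with x 0 = t, x 1 = r, x 2 = theta, x 3 = phi
  (entries at indices >= 4 are ignored). Tensor indices range over {0..3}.\<close>

type_synonym point = "nat \<Rightarrow> real"

definition smooth_on :: "(real \<Rightarrow> real) \<Rightarrow> real set \<Rightarrow> bool" where
  "smooth_on f S \<longleftrightarrow> (\<forall>n. (deriv ^^ n) f differentiable_on S)"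

definition pd :: "nat \<Rightarrow> (point \<Rightarrow> real) \<Rightarrow> point \<Rightarrow> real" where
  "pd i F x = deriv (\<lambda>s. F (x(i := s))) (x i)"

definition christoffel ::
  "(point \<Rightarrow> nat \<Rightarrow> nat \<Rightarrow> real) \<Rightarrow> (point \<Rightarrow> nat \<Rightarrow> nat \<Rightarrow> real) \<Rightarrow> point \<Rightarrow> nat \<Rightarrow> nat \<Rightarrow> nat \<Rightarrow> real" where
  "christoffel g gi x m i j =
     (\<Sum>l<4. gi x m l * (pd i (\<lambda>y. g y l j) x + pd j (\<lambda>y. g y l i) x - pd l (\<lambda>y. g y i j) x)) / 2"

definition cov2 ::
  "(point \<Rightarrow> nat \<Rightarrow> nat \<Rightarrow> real) \<Rightarrow> (point \<Rightarrow> nat \<Rightarrow> nat \<Rightarrow> real) \<Rightarrow> (point \<Rightarrow> nat \<Rightarrow> nat \<Rightarrow> real)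
     \<Rightarrow> point \<Rightarrow> nat \<Rightarrow> nat \<Rightarrow> nat \<Rightarrow> real" where
  "cov2 g gi K x j k l =
     pd j (\<lambda>y. K y k l) x
     - (\<Sum>m<4. christoffel g gi x m j k * K x m l)
     - (\<Sum>m<4. christoffel g gi x m j l * K x k m)"

definition trace2 :: "(point \<Rightarrow> nat \<Rightarrow> nat \<Rightarrow> real) \<Rightarrow> (point \<Rightarrow> nat \<Rightarrow> nat \<Rightarrow> real) \<Rightarrow> point \<Rightarrow> real" where
  "trace2 gi K x = (\<Sum>k<4. \<Sum>l<4. gi x k l * K x k l)"

definition conformal_killing_at ::
  "(point \<Rightarrow> nat \<Rightarrow> nat \<Rightarrow> real) \<Rightarrow> (point \<Rightarrow> nat \<Rightarrow> nat \<Rightarrow> real) \<Rightarrow> (point \<Rightarrow> nat \<Rightarrow> nat \<Rightarrow> real) \<Rightarrow> point \<Rightarrow> bool" where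
  "conformal_killing_at g gi K x \<longleftrightarrow>
     (\<forall>j<4. \<forall>k<4. \<forall>l<4.
        cov2 g gi K x j k l + cov2 g gi K x k j l + cov2 g gi K x l j k
        = (1/6) * (g x k l * pd j (trace2 gi K) x + g x j l * pd k (trace2 gi K) x
                   + g x j k * pd l (trace2 gi K) x))"

definition divergence_free_at ::
  "(point \<Rightarrow> nat \<Rightarrow> nat \<Rightarrow> real) \<Rightarrow> (point \<Rightarrow> nat \<Rightarrow> nat \<Rightarrow> real) \<Rightarrow> (point \<Rightarrow> nat \<Rightarrow> nat \<Rightarrow> real) \<Rightarrow> point \<Rightarrow> bool" where
  "divergence_free_at g gi K x \<longleftrightarrow>
     (\<forall>l<4. (\<Sum>k<4. \<Sum>j<4. gi x k j * cov2 g gi K x j k l) = 0)"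

definition sss_metric :: "(real \<Rightarrow> real) \<Rightarrow> (real \<Rightarrow> real) \<Rightarrow> (real \<Rightarrow> real) \<Rightarrow> point \<Rightarrow> nat \<Rightarrow> nat \<Rightarrow> real" where
  "sss_metric b f1 f2 x i j =
     (if i \<noteq> j then 0
      else if i = 0 then - (b (x 1))\<^sup>2
      else if i = 1 then (f1 (x 1))\<^sup>2
      else if i = 2 then (f2 (x 1))\<^sup>2
      else if i = 3 then (f2 (x 1))\<^sup>2 * (sin (x 2))\<^sup>2
      else 0)"

definition sss_metric_inv :: "(real \<Rightarrow> real) \<Rightarrow> (real \<Rightarrow> real) \<Rightarrow> (real \<Rightarrow> real) \<Rightarrow> point \<Rightarrow> nat \<Rightarrow> nat \<Rightarrow> real" where
  "sss_metric_inv b f1 f2 x i j = (if i = j then inverse (sss_metric b f1 f2 x i i) else 0)"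

definition u_cov :: "(real \<Rightarrow> real) \<Rightarrow> point \<Rightarrow> nat \<Rightarrow> real" where
  "u_cov b x k = (if k = 0 then - b (x 1) else 0)"

definition chi_cov :: "(real \<Rightarrow> real) \<Rightarrow> point \<Rightarrow> nat \<Rightarrow> real" where
  "chi_cov f1 x k = (if k = 1 then f1 (x 1) else 0)"

definition K_tensor ::
  "(real \<Rightarrow> real) \<Rightarrow> (real \<Rightarrow> real) \<Rightarrow> (real \<Rightarrow> real) \<Rightarrow> (real \<Rightarrow> real) \<Rightarrow> (real \<Rightarrow> real) \<Rightarrow> (real \<Rightarrow> real)
     \<Rightarrow> point \<Rightarrow> nat \<Rightarrow> nat \<Rightarrow> real" where
  "K_tensor A B C b f1 f2 x k l =
     A (x 1) * u_cov b x k * u_cov b x l + B (x 1) * sss_metric b f1 f2 x k l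
     + C (x 1) * chi_cov f1 x k * chi_cov f1 x l"

end

theory Submission imports Defs begin

lemma sum4: "(\<Sum>k<(4::nat). f k) = f 0 + f 1 + f 2 + f 3"
  by (simp add: eval_nat_numeral)

lemma all4: "(\<forall>k<(4::nat). P k) \<longleftrightarrow> P 0 \<and> P 1 \<and> P 2 \<and> P 3"
  by (auto simp: eval_nat_numeral less_Suc_eq)

lemma pd_indep:
  assumes "\<And>y z. y 1 = z 1 \<Longrightarrow> y 2 = z 2 \<Longrightarrow> F y = F z" "i \<noteq> 1" "i \<noteq> 2"
  shows "pd i F x = 0"
proof -
  have "(\<lambda>s. F (x(i := s))) = (\<lambda>s. F x)"
    using assms by (intro ext assms(1)) auto
  thus ?thesis by (simp add: pd_def)
qed

lemma g_indep: "y 1 = z 1 \<Longrightarrow> y 2 = z 2 \<Longrightarrow> sss_metric b f1 f2 y k l = sss_metric b f1 f2 z k l"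
  by (simp add: sss_metric_def)
lemma K_indep: "y 1 = z 1 \<Longrightarrow> y 2 = z 2 \<Longrightarrow> K_tensor A B C b f1 f2 y k l = K_tensor A B C b f1 f2 z k l"
  by (simp add: K_tensor_def sss_metric_def u_cov_def chi_cov_def)
lemma tr_indep: "y 1 = z 1 \<Longrightarrow> y 2 = z 2 \<Longrightarrow> trace2 (sss_metric_inv b f1 f2) (K_tensor A B C b f1 f2) y = trace2 (sss_metric_inv b f1 f2) (K_tensor A B C b f1 f2) z"
  by (simp cong: if_cong add: trace2_def K_tensor_def sss_metric_inv_def sss_metric_def u_cov_def chi_cov_def)


lemma alg_fwd:
  fixes b0 b1 f0 h0 h1 A0 A1 B1 C0 C1 :: real
  assumes p: "b0 > 0" "f0 > 0" "h0 > 0"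
    and e1: "3*(B1+C1)*f0\<^sup>2 = f0\<^sup>2 * (-A1+4*B1+C1) / 2"
    and e2: "B1*h0\<^sup>2 + 2*C0*h0*h1 = h0\<^sup>2 * (-A1+4*B1+C1) / 6"
    and e3: "(A1-B1)*b0\<^sup>2 - 2*(A0+C0)*b0*b1 = -(b0\<^sup>2 * (-A1+4*B1+C1) / 6)"
    and e4: "B1 + C1 + (A0+C0)*b1/b0 + 2*C0*h1/h0 = 0"
  shows "C1 * h0 = 2 * C0 * h1" "A1 * b0 = 2 * (A0 + C0) * b1 - C1 * b0"
    "B1 * b0 = - (A0 + C0) * b1 - 2 * C1 * b0"
proof -
  have "f0\<^sup>2 * (6*(B1+C1) - (-A1+4*B1+C1)) = 0" using e1 by (simp add: algebra_simps)
  hence "6*(B1+C1) - (-A1+4*B1+C1) = 0" using p by simp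
  hence l: "(-A1+4*B1+C1) / 6 = B1 + C1" by simp
  have a: "C1 * h0 = 2 * C0 * h1"
  proof -
    have "B1*h0\<^sup>2 + 2*C0*h0*h1 = h0\<^sup>2 * ((-A1+4*B1+C1) / 6)" using e2 by (simp only: times_divide_eq_right)
    hence "B1*h0\<^sup>2 + 2*C0*h0*h1 = h0\<^sup>2 * (B1 + C1)" unfolding l .
    hence "h0 * (2*C0*h1 - C1*h0) = 0" by (simp add: algebra_simps power2_eq_square)
    thus ?thesis using p by simp
  qed
  show "C1 * h0 = 2 * C0 * h1" by (rule a)
  show "A1 * b0 = 2 * (A0 + C0) * b1 - C1 * b0"
  proof -
    have "(A1-B1)*b0\<^sup>2 - 2*(A0+C0)*b0*b1 = -(b0\<^sup>2 * ((-A1+4*B1+C1) / 6))" using e3 by (simp only: times_divide_eq_right)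
    hence "(A1-B1)*b0\<^sup>2 - 2*(A0+C0)*b0*b1 = -(b0\<^sup>2 * (B1 + C1))" unfolding l .
    hence "b0 * (A1 * b0 - 2 * (A0 + C0) * b1 + C1 * b0) = 0" by (simp add: algebra_simps power2_eq_square)
    thus ?thesis using p by simp
  qed
  show "B1 * b0 = - (A0 + C0) * b1 - 2 * C1 * b0"
  proof -
    have "2*C0*h1/h0 = C1" using a p by (simp add: field_simps)
    hence "B1 + 2 * C1 + (A0+C0)*b1/b0 = 0" using e4 by simp
    hence "b0 * (B1 + 2 * C1) + (A0+C0)*b1 = 0" using p by (simp add: field_simps)
    thus ?thesis by (simp add: algebra_simps)
  qed
qed

context
  fixes b f1 f2 A B C :: "real \<Rightarrow> real" and I :: "real set"
  assumes I: "open I"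
    and bpos: "\<And>r. r\<in>I \<Longrightarrow> b r > 0" and f1pos: "\<And>r. r\<in>I \<Longrightarrow> f1 r > 0" and f2pos: "\<And>r. r\<in>I \<Longrightarrow> f2 r > 0"
    and db: "\<And>r. r\<in>I \<Longrightarrow> (b has_real_derivative deriv b r) (at r)"
    and df1: "\<And>r. r\<in>I \<Longrightarrow> (f1 has_real_derivative deriv f1 r) (at r)"
    and df2: "\<And>r. r\<in>I \<Longrightarrow> (f2 has_real_derivative deriv f2 r) (at r)"
    and dA: "\<And>r. r\<in>I \<Longrightarrow> (A has_real_derivative deriv A r) (at r)"
    and dB: "\<And>r. r\<in>I \<Longrightarrow> (B has_real_derivative deriv B r) (at r)"
    and dC: "\<And>r. r\<in>I \<Longrightarrow> (C has_real_derivative deriv C r) (at r)"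
begin

lemma pd_g:
  assumes x: "x 1 \<in> I"
  shows "pd i (\<lambda>y. sss_metric b f1 f2 y k l) x =
    (if k \<noteq> l then 0
     else if i = 1 then
       (if k = 0 then - (2 * b (x 1) * deriv b (x 1))
        else if k = 1 then 2 * f1 (x 1) * deriv f1 (x 1)
        else if k = 2 then 2 * f2 (x 1) * deriv f2 (x 1)
        else if k = 3 then 2 * f2 (x 1) * deriv f2 (x 1) * (sin (x 2))\<^sup>2
        else 0)
     else if i = 2 then (if k = 3 then (f2 (x 1))\<^sup>2 * (2 * sin (x 2) * cos (x 2)) else 0)
     else 0)"
proof -
  consider "i = 1" | "i = 2" | "i \<noteq> 1 \<and> i \<noteq> 2" by blast
  thus ?thesis
  proof cases
    case 1
    have e: "pd i (\<lambda>y. sss_metric b f1 f2 y k l) x = deriv (\<lambda>s. sss_metric b f1 f2 (x(1:=s)) k l) (x 1)"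
      using 1 by (simp add: pd_def)
    show ?thesis
      unfolding e using 1
      apply (simp cong: if_cong add: sss_metric_def)
      apply (intro conjI impI DERIV_imp_deriv)
      apply (auto intro!: derivative_eq_intros db df1 df2 x[unfolded One_nat_def])
      done
  next
    case 2
    have e: "pd i (\<lambda>y. sss_metric b f1 f2 y k l) x = deriv (\<lambda>s. sss_metric b f1 f2 (x(2:=s)) k l) (x 2)"
      using 2 by (simp add: pd_def)
    show ?thesis
      unfolding e using 2
      apply (simp cong: if_cong add: sss_metric_def)
      apply (intro conjI impI DERIV_imp_deriv)
      apply (auto intro!: derivative_eq_intros)
      done
  next
    case 3
    thus ?thesis by (auto intro!: pd_indep g_indep)
  qed
qed

lemma pd_K:
  assumes x: "x 1 \<in> I"
  shows "pd i (\<lambda>y. K_tensor A B C b f1 f2 y k l) x =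
    (if k \<noteq> l then 0
     else if i = 1 then
       (if k = 0 then (deriv A (x 1) - deriv B (x 1)) * (b (x 1))\<^sup>2 + 2 * (A (x 1) - B (x 1)) * b (x 1) * deriv b (x 1)
        else if k = 1 then (deriv B (x 1) + deriv C (x 1)) * (f1 (x 1))\<^sup>2 + 2 * (B (x 1) + C (x 1)) * f1 (x 1) * deriv f1 (x 1)
        else if k = 2 then deriv B (x 1) * (f2 (x 1))\<^sup>2 + 2 * B (x 1) * f2 (x 1) * deriv f2 (x 1)
        else if k = 3 then (deriv B (x 1) * (f2 (x 1))\<^sup>2 + 2 * B (x 1) * f2 (x 1) * deriv f2 (x 1)) * (sin (x 2))\<^sup>2
        else 0)
     else if i = 2 then (if k = 3 then B (x 1) * (f2 (x 1))\<^sup>2 * (2 * sin (x 2) * cos (x 2)) else 0)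
     else 0)"
proof -
  have x': "x (Suc 0) \<in> I" using x by simp
  consider "i = 1" | "i = 2" | "i \<noteq> 1 \<and> i \<noteq> 2" by blast
  thus ?thesis
  proof cases
    case 1
    have e: "pd i (\<lambda>y. K_tensor A B C b f1 f2 y k l) x = deriv (\<lambda>s. K_tensor A B C b f1 f2 (x(1:=s)) k l) (x 1)"
      using 1 by (simp add: pd_def)
    show ?thesis
      unfolding e using 1
      apply (simp cong: if_cong add: K_tensor_def sss_metric_def u_cov_def chi_cov_def)
      apply (intro conjI impI DERIV_imp_deriv)
      apply (auto intro!: derivative_eq_intros db df1 df2 dA dB dC x x' simp: algebra_simps power2_eq_square)
      done
  next
    case 2
    have e: "pd i (\<lambda>y. K_tensor A B C b f1 f2 y k l) x = deriv (\<lambda>s. K_tensor A B C b f1 f2 (x(2:=s)) k l) (x 2)"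
      using 2 by (simp add: pd_def)
    show ?thesis
      unfolding e using 2
      apply (simp cong: if_cong add: K_tensor_def sss_metric_def u_cov_def chi_cov_def)
      apply (intro conjI impI DERIV_imp_deriv)
      apply (auto intro!: derivative_eq_intros simp: algebra_simps power2_eq_square)
      done
  next
    case 3
    thus ?thesis by (auto intro!: pd_indep K_indep)
  qed
qed

lemma trace_val:
  assumes "y 1 \<in> I" "sin (y 2) \<noteq> 0"
  shows "trace2 (sss_metric_inv b f1 f2) (K_tensor A B C b f1 f2) y = - A (y 1) + 4 * B (y 1) + C (y 1)"
proof -
  have "b (y 1) > 0" "f1 (y 1) > 0" "f2 (y 1) > 0" using assms bpos f1pos f2pos by auto
  thus ?thesis using assms
    by (simp add: trace2_def sum4 K_tensor_def sss_metric_inv_def sss_metric_def u_cov_def chi_cov_def field_simps power2_eq_square)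
qed

lemma pd_trace:
  assumes x: "x 1 \<in> I" and th: "0 < x 2" "x 2 < pi"
  shows "pd i (trace2 (sss_metric_inv b f1 f2) (K_tensor A B C b f1 f2)) x =
     (if i = 1 then - deriv A (x 1) + 4 * deriv B (x 1) + deriv C (x 1) else 0)"
proof -
  have sx: "sin (x 2) \<noteq> 0" using th sin_gt_zero by force
  consider "i = 1" | "i = 2" | "i \<noteq> 1 \<and> i \<noteq> 2" by blast
  thus ?thesis
  proof cases
    case 1
    have ev: "eventually (\<lambda>s. s \<in> I) (nhds (x 1))"
      using I x by (rule eventually_nhds_in_open)
    have "pd i (trace2 (sss_metric_inv b f1 f2) (K_tensor A B C b f1 f2)) x
       = deriv (\<lambda>s. trace2 (sss_metric_inv b f1 f2) (K_tensor A B C b f1 f2) (x(1:=s))) (x 1)"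
      using 1 by (simp add: pd_def)
    also have "\<dots> = deriv (\<lambda>s. - A s + 4 * B s + C s) (x 1)"
      by (rule deriv_cong_ev[OF eventually_mono[OF ev]]) (auto simp: trace_val sx)
    also have "\<dots> = - deriv A (x 1) + 4 * deriv B (x 1) + deriv C (x 1)"
      by (rule DERIV_imp_deriv) (use x in \<open>auto intro!: derivative_eq_intros dA dB dC\<close>)
    finally show ?thesis using 1 by simp
  next
    case 2
    have ev: "eventually (\<lambda>s. s \<in> {0<..<pi}) (nhds (x 2))"
      using th by (intro eventually_nhds_in_open) auto
    have "pd i (trace2 (sss_metric_inv b f1 f2) (K_tensor A B C b f1 f2)) x
       = deriv (\<lambda>s. trace2 (sss_metric_inv b f1 f2) (K_tensor A B C b f1 f2) (x(2:=s))) (x 2)"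
      using 2 by (simp add: pd_def)
    also have "\<dots> = deriv (\<lambda>s. - A (x 1) + 4 * B (x 1) + C (x 1)) (x 2)"
    proof (rule deriv_cong_ev[OF eventually_mono[OF ev]])
      fix s :: real assume "s \<in> {0<..<pi}"
      hence "sin s \<noteq> 0" using sin_gt_zero by force
      thus "trace2 (sss_metric_inv b f1 f2) (K_tensor A B C b f1 f2) (x(2:=s)) = - A (x 1) + 4 * B (x 1) + C (x 1)"
        using trace_val[of "x(2:=s)"] x by simp
    qed simp
    also have "\<dots> = 0" by simp
    finally show ?thesis using 2 by simp
  next
    case 3
    thus ?thesis by (auto intro!: pd_indep tr_indep)
  qed
qed


abbreviation "GG \<equiv> sss_metric b f1 f2"
abbreviation "GI \<equiv> sss_metric_inv b f1 f2"
abbreviation "KK \<equiv> K_tensor A B C b f1 f2"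

lemmas expand = pd_g pd_K pd_trace

lemma comps:
  assumes x: "x 1 \<in> I" and th: "0 < x 2" "x 2 < pi"
  shows "cov2 GG GI KK x 1 1 1 + cov2 GG GI KK x 1 1 1 + cov2 GG GI KK x 1 1 1
           = 3 * (deriv B (x 1) + deriv C (x 1)) * (f1 (x 1))\<^sup>2"
    and "cov2 GG GI KK x 1 2 2 + cov2 GG GI KK x 2 1 2 + cov2 GG GI KK x 2 1 2
           = deriv B (x 1) * (f2 (x 1))\<^sup>2 + 2 * C (x 1) * f2 (x 1) * deriv f2 (x 1)"
    and "cov2 GG GI KK x 0 0 1 + cov2 GG GI KK x 0 0 1 + cov2 GG GI KK x 1 0 0
           = (deriv A (x 1) - deriv B (x 1)) * (b (x 1))\<^sup>2 - 2 * (A (x 1) + C (x 1)) * b (x 1) * deriv b (x 1)"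
    and "(\<Sum>k<4. \<Sum>j<4. GI x k j * cov2 GG GI KK x j k 1)
           = deriv B (x 1) + deriv C (x 1) + (A (x 1) + C (x 1)) * deriv b (x 1) / b (x 1)
             + 2 * C (x 1) * deriv f2 (x 1) / f2 (x 1)"
proof -
  have sx: "sin (x 2) > 0" using th sin_gt_zero by force
  have p: "b (x 1) > 0" "f1 (x 1) > 0" "f2 (x 1) > 0" using x bpos f1pos f2pos by auto
  note e = pd_g[of x, OF x] pd_K[of x, OF x] pd_trace[of x, OF x th]
  note d = sss_metric_inv_def sss_metric_def K_tensor_def u_cov_def chi_cov_def
  show "cov2 GG GI KK x 1 1 1 + cov2 GG GI KK x 1 1 1 + cov2 GG GI KK x 1 1 1
           = 3 * (deriv B (x 1) + deriv C (x 1)) * (f1 (x 1))\<^sup>2"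
    unfolding cov2_def christoffel_def sum4 using p sx by (simp add: e) (simp add: d field_simps power2_eq_square)
  show "cov2 GG GI KK x 1 2 2 + cov2 GG GI KK x 2 1 2 + cov2 GG GI KK x 2 1 2
           = deriv B (x 1) * (f2 (x 1))\<^sup>2 + 2 * C (x 1) * f2 (x 1) * deriv f2 (x 1)"
    unfolding cov2_def christoffel_def sum4 using p sx by (simp add: e) (simp add: d field_simps power2_eq_square)
  show "cov2 GG GI KK x 0 0 1 + cov2 GG GI KK x 0 0 1 + cov2 GG GI KK x 1 0 0
           = (deriv A (x 1) - deriv B (x 1)) * (b (x 1))\<^sup>2 - 2 * (A (x 1) + C (x 1)) * b (x 1) * deriv b (x 1)"
    unfolding cov2_def christoffel_def sum4 using p sx by (simp add: e) (simp add: d field_simps power2_eq_square)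
  show "(\<Sum>k<4. \<Sum>j<4. GI x k j * cov2 GG GI KK x j k 1)
           = deriv B (x 1) + deriv C (x 1) + (A (x 1) + C (x 1)) * deriv b (x 1) / b (x 1)
             + 2 * C (x 1) * deriv f2 (x 1) / f2 (x 1)"
    unfolding cov2_def christoffel_def sum4 using p sx by (simp add: e) (simp add: d field_simps power2_eq_square)
qed

lemma fwd:
  assumes x: "x 1 \<in> I" and th: "0 < x 2" "x 2 < pi"
    and ck: "conformal_killing_at GG GI KK x" and dv: "divergence_free_at GG GI KK x"
  shows "deriv C (x 1) * f2 (x 1) = 2 * C (x 1) * deriv f2 (x 1)"
    "deriv A (x 1) * b (x 1) = 2 * (A (x 1) + C (x 1)) * deriv b (x 1) - deriv C (x 1) * b (x 1)"
    "deriv B (x 1) * b (x 1) = - (A (x 1) + C (x 1)) * deriv b (x 1) - 2 * deriv C (x 1) * b (x 1)"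
proof -
  have p: "b (x 1) > 0" "f1 (x 1) > 0" "f2 (x 1) > 0" using x bpos f1pos f2pos by auto
  note c = comps[OF x th]
  note e = pd_trace[of x, OF x th]
  let ?T = "- deriv A (x 1) + 4 * deriv B (x 1) + deriv C (x 1)"
  have k1: "cov2 GG GI KK x 1 1 1 + cov2 GG GI KK x 1 1 1 + cov2 GG GI KK x 1 1 1 = (1/6) * (GG x 1 1 * ?T + GG x 1 1 * ?T + GG x 1 1 * ?T)"
    using ck[unfolded conformal_killing_at_def, rule_format, of 1 1 1] by (simp add: e)
  have k2: "cov2 GG GI KK x 1 2 2 + cov2 GG GI KK x 2 1 2 + cov2 GG GI KK x 2 1 2 = (1/6) * (GG x 2 2 * ?T)"
    using ck[unfolded conformal_killing_at_def, rule_format, of 1 2 2] by (simp add: e sss_metric_def)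
  have k3: "cov2 GG GI KK x 0 0 1 + cov2 GG GI KK x 0 0 1 + cov2 GG GI KK x 1 0 0 = (1/6) * (GG x 0 0 * ?T)"
    using ck[unfolded conformal_killing_at_def, rule_format, of 0 0 1] by (simp add: e sss_metric_def)
  have k4: "(\<Sum>k<4. \<Sum>j<4. GI x k j * cov2 GG GI KK x j k 1) = 0"
    using dv[unfolded divergence_free_at_def, rule_format, of 1] by simp
  have g: "GG x 1 1 = (f1 (x 1))\<^sup>2" "GG x 2 2 = (f2 (x 1))\<^sup>2" "GG x 0 0 = - (b (x 1))\<^sup>2"
    by (simp_all add: sss_metric_def)
  have E1: "3 * (deriv B (x 1) + deriv C (x 1)) * (f1 (x 1))\<^sup>2 = (f1 (x 1))\<^sup>2 * ?T / 2"
      using k1 unfolding c(1) g(1) by (simp add: field_simps)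
  have E2: "deriv B (x 1) * (f2 (x 1))\<^sup>2 + 2 * C (x 1) * f2 (x 1) * deriv f2 (x 1) = (f2 (x 1))\<^sup>2 * ?T / 6"
      using k2 unfolding c(2) g(2) by (simp add: field_simps)
  have E3: "(deriv A (x 1) - deriv B (x 1)) * (b (x 1))\<^sup>2 - 2 * (A (x 1) + C (x 1)) * b (x 1) * deriv b (x 1) = - ((b (x 1))\<^sup>2 * ?T / 6)"
      using k3 unfolding c(3) g(3) by (simp add: field_simps)
  have E4: "deriv B (x 1) + deriv C (x 1) + (A (x 1) + C (x 1)) * deriv b (x 1) / b (x 1) + 2 * C (x 1) * deriv f2 (x 1) / f2 (x 1) = 0"
      using k4 unfolding c(4) .
  note R = alg_fwd[OF p(1,2,3) E1 E2 E3 E4]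
  show "deriv C (x 1) * f2 (x 1) = 2 * C (x 1) * deriv f2 (x 1)" by (rule R(1))
  show "deriv A (x 1) * b (x 1) = 2 * (A (x 1) + C (x 1)) * deriv b (x 1) - deriv C (x 1) * b (x 1)" by (rule R(2))
  show "deriv B (x 1) * b (x 1) = - (A (x 1) + C (x 1)) * deriv b (x 1) - 2 * deriv C (x 1) * b (x 1)" by (rule R(3))
qed

lemma bwd:
  assumes x: "x 1 \<in> I" and th: "0 < x 2" "x 2 < pi"
    and o1: "deriv C (x 1) = 2 * C (x 1) * deriv f2 (x 1) / f2 (x 1)"
    and o2: "deriv A (x 1) = 2 * (A (x 1) + C (x 1)) * deriv b (x 1) / b (x 1) - 2 * C (x 1) * deriv f2 (x 1) / f2 (x 1)"
    and o3: "deriv B (x 1) = - (A (x 1) + C (x 1)) * deriv b (x 1) / b (x 1) - 4 * C (x 1) * deriv f2 (x 1) / f2 (x 1)"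
  shows "conformal_killing_at GG GI KK x \<and> divergence_free_at GG GI KK x"
proof -
  have sx: "sin (x 2) > 0" using th sin_gt_zero by force
  have p: "b (x 1) > 0" "f1 (x 1) > 0" "f2 (x 1) > 0" using x bpos f1pos f2pos by auto
  note e = pd_g[of x, OF x] pd_K[of x, OF x] pd_trace[of x, OF x th]
  note d = sss_metric_inv_def sss_metric_def K_tensor_def u_cov_def chi_cov_def
  note o = o1 o2 o3 o1[simplified] o2[simplified] o3[simplified]
  show ?thesis
    unfolding conformal_killing_at_def divergence_free_at_def cov2_def christoffel_def all4 sum4
    using p sx by (simp add: e) (simp add: d o field_simps power2_eq_square)
qed

lemma const_on:
  assumes "is_interval I" "\<And>r. r \<in> I \<Longrightarrow> (h has_real_derivative 0) (at r)"
  shows "\<exists>c. \<forall>r\<in>I. h r = c"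
  using assms by (intro has_field_derivative_zero_constant) (auto simp: is_interval_convex has_field_derivative_at_within)

lemma main:
  assumes iv: "is_interval I"
  shows "(\<forall>x::point. x 1 \<in> I \<and> 0 < x 2 \<and> x 2 < pi \<longrightarrow>
            conformal_killing_at GG GI KK x \<and> divergence_free_at GG GI KK x)
     \<longleftrightarrow> (\<exists>\<kappa>1 \<kappa>2 \<kappa>3 :: real. \<forall>r\<in>I.
            A r = \<kappa>2 * (f2 r)\<^sup>2 - 2 * \<kappa>3 * (b r)\<^sup>2
          \<and> B r = \<kappa>1 + 2 * \<kappa>2 * (f2 r)\<^sup>2 + \<kappa>3 * (b r)\<^sup>2
          \<and> C r = - \<kappa>2 * (f2 r)\<^sup>2)"
proof
  assume H: "\<forall>x::point. x 1 \<in> I \<and> 0 < x 2 \<and> x 2 < pi \<longrightarrow>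
            conformal_killing_at GG GI KK x \<and> divergence_free_at GG GI KK x"
  have ode: "deriv C r * f2 r = 2 * C r * deriv f2 r \<and>
    deriv A r * b r = 2 * (A r + C r) * deriv b r - deriv C r * b r \<and>
    deriv B r * b r = - (A r + C r) * deriv b r - 2 * deriv C r * b r" if r: "r \<in> I" for r
  proof -
    define x :: point where "x = (\<lambda>i. if i = 1 then r else if i = 2 then pi/2 else 0)"
    have x1: "x 1 = r" "x 2 = pi/2" by (auto simp: x_def)
    have xi: "x 1 \<in> I" "0 < x 2" "x 2 < pi" using r by (auto simp: x_def)
    have "conformal_killing_at GG GI KK x \<and> divergence_free_at GG GI KK x" using H xi by blast
    from fwd[OF xi this[THEN conjunct1] this[THEN conjunct2]] show ?thesis unfolding x1 by blast
  qed
  have pos: "b r > 0" "f1 r > 0" "f2 r > 0" if "r \<in> I" for r using that bpos f1pos f2pos by auto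
  obtain c2 where c2: "\<forall>r\<in>I. C r / (f2 r)\<^sup>2 = c2"
  proof -
    have "\<exists>c. \<forall>r\<in>I. C r / (f2 r)\<^sup>2 = c"
    proof (rule const_on[OF iv])
      fix r assume r: "r \<in> I"
      have "((\<lambda>r. C r / (f2 r)\<^sup>2) has_real_derivative
         (deriv C r * (f2 r)\<^sup>2 - C r * (2 * f2 r * deriv f2 r)) / ((f2 r)\<^sup>2)\<^sup>2) (at r)"
        using pos[OF r] by (auto intro!: derivative_eq_intros dC df2 r simp: power2_eq_square)
      moreover have "deriv C r * (f2 r)\<^sup>2 - C r * (2 * f2 r * deriv f2 r) = 0"
        using ode[OF r] by (simp add: power2_eq_square algebra_simps)
      ultimately show "((\<lambda>r. C r / (f2 r)\<^sup>2) has_real_derivative 0) (at r)" by simp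
    qed
    thus ?thesis using that by blast
  qed
  obtain c3 where c3: "\<forall>r\<in>I. (A r + C r) / (b r)\<^sup>2 = c3"
  proof -
    have "\<exists>c. \<forall>r\<in>I. (A r + C r) / (b r)\<^sup>2 = c"
    proof (rule const_on[OF iv])
      fix r assume r: "r \<in> I"
      have "((\<lambda>r. (A r + C r) / (b r)\<^sup>2) has_real_derivative
         ((deriv A r + deriv C r) * (b r)\<^sup>2 - (A r + C r) * (2 * b r * deriv b r)) / ((b r)\<^sup>2)\<^sup>2) (at r)"
        using pos[OF r] by (auto intro!: derivative_eq_intros dA dC db r simp: power2_eq_square)
      moreover have "(deriv A r + deriv C r) * (b r)\<^sup>2 - (A r + C r) * (2 * b r * deriv b r) = 0"
      proof -
        have e: "deriv A r * b r + deriv C r * b r - 2*(A r + C r)*deriv b r = 0"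
          using ode[OF r] by (simp add: algebra_simps)
        have "(deriv A r + deriv C r) * (b r)\<^sup>2 - (A r + C r) * (2 * b r * deriv b r)
           = b r * (deriv A r * b r + deriv C r * b r - 2*(A r + C r)*deriv b r)"
          by (simp add: algebra_simps power2_eq_square)
        thus ?thesis using e by simp
      qed
      ultimately show "((\<lambda>r. (A r + C r) / (b r)\<^sup>2) has_real_derivative 0) (at r)" by simp
    qed
    thus ?thesis using that by blast
  qed
  define k2 where "k2 = - c2"
  define k3 where "k3 = - c3 / 2"
  have Cf: "C r = - k2 * (f2 r)\<^sup>2" if r: "r \<in> I" for r
    using c2 r pos[OF r] by (auto simp: k2_def field_simps)
  have Df: "A r + C r = - 2 * k3 * (b r)\<^sup>2" if r: "r \<in> I" for r
    using c3 r pos[OF r] by (auto simp: k3_def field_simps)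
  obtain c1 where c1: "\<forall>r\<in>I. B r - k3 * (b r)\<^sup>2 - 2 * k2 * (f2 r)\<^sup>2 = c1"
  proof -
    have "\<exists>c. \<forall>r\<in>I. B r - k3 * (b r)\<^sup>2 - 2 * k2 * (f2 r)\<^sup>2 = c"
    proof (rule const_on[OF iv])
      fix r assume r: "r \<in> I"
      have "((\<lambda>r. B r - k3 * (b r)\<^sup>2 - 2 * k2 * (f2 r)\<^sup>2) has_real_derivative
         deriv B r - k3 * (2 * b r * deriv b r) - 2 * k2 * (2 * f2 r * deriv f2 r)) (at r)"
        by (auto intro!: derivative_eq_intros dB db df2 r simp: power2_eq_square)
      moreover have "deriv B r - k3 * (2 * b r * deriv b r) - 2 * k2 * (2 * f2 r * deriv f2 r) = 0"
      proof -
        have o: "deriv C r * f2 r = 2 * C r * deriv f2 r" "deriv B r * b r = - (A r + C r) * deriv b r - 2 * deriv C r * b r"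
          using ode[OF r] by auto
        have "f2 r * (deriv C r + 2 * k2 * f2 r * deriv f2 r) = 0"
          using o(1) Cf[OF r] by (simp add: algebra_simps power2_eq_square)
        hence "deriv C r + 2 * k2 * f2 r * deriv f2 r = 0"
          using pos[OF r] by simp
        hence "deriv C r = - (2 * k2 * f2 r * deriv f2 r)"
          by (simp add: eq_neg_iff_add_eq_0)
        moreover have "deriv B r = 2 * k3 * b r * deriv b r - 2 * deriv C r"
        proof -
          have "b r * (deriv B r + 2 * deriv C r - 2 * k3 * b r * deriv b r) = 0"
            using o(2) Df[OF r] by (simp add: algebra_simps power2_eq_square)
          hence "deriv B r + 2 * deriv C r - 2 * k3 * b r * deriv b r = 0" using pos[OF r] by simp
          thus ?thesis by simp
        qed
        ultimately show ?thesis by (simp add: algebra_simps)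
      qed
      ultimately show "((\<lambda>r. B r - k3 * (b r)\<^sup>2 - 2 * k2 * (f2 r)\<^sup>2) has_real_derivative 0) (at r)" by simp
    qed
    thus ?thesis using that by blast
  qed
  show "\<exists>\<kappa>1 \<kappa>2 \<kappa>3 :: real. \<forall>r\<in>I.
            A r = \<kappa>2 * (f2 r)\<^sup>2 - 2 * \<kappa>3 * (b r)\<^sup>2
          \<and> B r = \<kappa>1 + 2 * \<kappa>2 * (f2 r)\<^sup>2 + \<kappa>3 * (b r)\<^sup>2
          \<and> C r = - \<kappa>2 * (f2 r)\<^sup>2"
  proof (intro exI ballI conjI)
    fix r assume r: "r \<in> I"
    show "C r = - k2 * (f2 r)\<^sup>2" by (rule Cf[OF r])
    show "A r = k2 * (f2 r)\<^sup>2 - 2 * k3 * (b r)\<^sup>2" using Cf[OF r] Df[OF r] by simp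
    show "B r = c1 + 2 * k2 * (f2 r)\<^sup>2 + k3 * (b r)\<^sup>2" using c1 r by force
  qed
next
  assume "\<exists>\<kappa>1 \<kappa>2 \<kappa>3 :: real. \<forall>r\<in>I.
            A r = \<kappa>2 * (f2 r)\<^sup>2 - 2 * \<kappa>3 * (b r)\<^sup>2
          \<and> B r = \<kappa>1 + 2 * \<kappa>2 * (f2 r)\<^sup>2 + \<kappa>3 * (b r)\<^sup>2
          \<and> C r = - \<kappa>2 * (f2 r)\<^sup>2"
  then obtain k1 k2 k3 where K: "\<forall>r\<in>I. A r = k2 * (f2 r)\<^sup>2 - 2 * k3 * (b r)\<^sup>2
          \<and> B r = k1 + 2 * k2 * (f2 r)\<^sup>2 + k3 * (b r)\<^sup>2
          \<and> C r = - k2 * (f2 r)\<^sup>2" by blast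
  show "\<forall>x::point. x 1 \<in> I \<and> 0 < x 2 \<and> x 2 < pi \<longrightarrow>
            conformal_killing_at GG GI KK x \<and> divergence_free_at GG GI KK x"
  proof (intro allI impI)
    fix x :: point assume xx: "x 1 \<in> I \<and> 0 < x 2 \<and> x 2 < pi"
    define r where "r = x 1"
    have r: "r \<in> I" using xx by (simp add: r_def)
    have p: "b r > 0" "f1 r > 0" "f2 r > 0" using r bpos f1pos f2pos by auto
    have dAe: "deriv A r = k2 * (2 * f2 r * deriv f2 r) - 2 * k3 * (2 * b r * deriv b r)"
    proof (rule DERIV_imp_deriv, rule has_field_derivative_transform_within_open[OF _ I r])
      show "((\<lambda>s. k2 * (f2 s)\<^sup>2 - 2 * k3 * (b s)\<^sup>2) has_real_derivative k2 * (2 * f2 r * deriv f2 r) - 2 * k3 * (2 * b r * deriv b r)) (at r)"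
        by (auto intro!: derivative_eq_intros db df2 r simp: power2_eq_square)
    qed (use K in auto)
    have dBe: "deriv B r = 2 * k2 * (2 * f2 r * deriv f2 r) + k3 * (2 * b r * deriv b r)"
    proof (rule DERIV_imp_deriv, rule has_field_derivative_transform_within_open[OF _ I r])
      show "((\<lambda>s. k1 + 2 * k2 * (f2 s)\<^sup>2 + k3 * (b s)\<^sup>2) has_real_derivative 2 * k2 * (2 * f2 r * deriv f2 r) + k3 * (2 * b r * deriv b r)) (at r)"
        by (auto intro!: derivative_eq_intros db df2 r simp: power2_eq_square)
    qed (use K in auto)
    have dCe: "deriv C r = - k2 * (2 * f2 r * deriv f2 r)"
    proof (rule DERIV_imp_deriv, rule has_field_derivative_transform_within_open[OF _ I r])
      show "((\<lambda>s. - k2 * (f2 s)\<^sup>2) has_real_derivative - k2 * (2 * f2 r * deriv f2 r)) (at r)"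
        by (auto intro!: derivative_eq_intros df2 r simp: power2_eq_square)
    qed (use K in auto)
    have Ar: "A r = k2 * (f2 r)\<^sup>2 - 2 * k3 * (b r)\<^sup>2" and Cr: "C r = - k2 * (f2 r)\<^sup>2" using K r by auto
    show "conformal_killing_at GG GI KK x \<and> divergence_free_at GG GI KK x"
    proof (rule bwd)
      show "x 1 \<in> I" "0 < x 2" "x 2 < pi" using xx by auto
      show "deriv C (x 1) = 2 * C (x 1) * deriv f2 (x 1) / f2 (x 1)"
        unfolding r_def[symmetric] dCe Cr using p by (simp add: field_simps power2_eq_square)
      show "deriv A (x 1) = 2 * (A (x 1) + C (x 1)) * deriv b (x 1) / b (x 1) - 2 * C (x 1) * deriv f2 (x 1) / f2 (x 1)"
        unfolding r_def[symmetric] dAe Cr Ar using p by (simp add: field_simps power2_eq_square)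
      show "deriv B (x 1) = - (A (x 1) + C (x 1)) * deriv b (x 1) / b (x 1) - 4 * C (x 1) * deriv f2 (x 1) / f2 (x 1)"
        unfolding r_def[symmetric] dBe Cr Ar using p by (simp add: field_simps power2_eq_square)
    qed
  qed
qed

end

lemma smooth_deriv:
  assumes "smooth_on f I" "open I" "r \<in> I"
  shows "(f has_real_derivative deriv f r) (at r)"
proof -
  have "f differentiable_on I" using assms(1) unfolding smooth_on_def by (metis funpow_0)
  hence "f differentiable at r" using assms(2,3) differentiable_on_eq_differentiable_at by blast
  thus ?thesis by (simp add: DERIV_deriv_iff_real_differentiable)
qed

theorem theorem1:
  fixes b f1 f2 A B C :: "real \<Rightarrow> real" and I :: "real set"
  assumes "open I" and "is_interval I" and "I \<noteq> {}"
    and "smooth_on b I" and "smooth_on f1 I" and "smooth_on f2 I"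
    and "\<forall>r\<in>I. b r > 0" and "\<forall>r\<in>I. f1 r > 0" and "\<forall>r\<in>I. f2 r > 0"
    and "smooth_on A I" and "smooth_on B I" and "smooth_on C I"
  shows "(\<forall>x::point. x 1 \<in> I \<and> 0 < x 2 \<and> x 2 < pi \<longrightarrow>
            conformal_killing_at (sss_metric b f1 f2) (sss_metric_inv b f1 f2) (K_tensor A B C b f1 f2) x
          \<and> divergence_free_at (sss_metric b f1 f2) (sss_metric_inv b f1 f2) (K_tensor A B C b f1 f2) x)
     \<longleftrightarrow> (\<exists>\<kappa>1 \<kappa>2 \<kappa>3 :: real. \<forall>r\<in>I.
            A r = \<kappa>2 * (f2 r)\<^sup>2 - 2 * \<kappa>3 * (b r)\<^sup>2
          \<and> B r = \<kappa>1 + 2 * \<kappa>2 * (f2 r)\<^sup>2 + \<kappa>3 * (b r)\<^sup>2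
          \<and> C r = - \<kappa>2 * (f2 r)\<^sup>2)"
  by (rule main) (use assms in \<open>auto intro: smooth_deriv\<close>)

end
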